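(* Let $G=(V,E)$ be a strongly connected directed graph with start $s$ and goal $g$, non-negative edge costs $f'_1,\dots,f'_n$, a monotone composition function $\beta$ defining path costs $f_i(P)=\beta(f'_i(e_1),f'_i(e_2),\dots)$, weights $w\in[0,1]^n$ and $\rho>0$. For any weight vector $w$, the Min-Max Cost Path algorithm described below returns an $s$–$g$ path $P^*\in\arg\min_P\left(\max_i w_i f_i(P)+\rho\sum_{i=1}^n f_i(P)\right)$, the minimum being over all paths from $s$ to $g$. Algorithm: initialize an open list containing the tuple $(0,s,(s))$. While the open list is nonempty: remove a tuple $(\mathit{cost},v,P)$ of minimum cost; if $v=g$, return $P$. Otherwise, for each neighbour $u$ of $v$: form $P^u=P$ extended by $u$; let $\mathcal P$ be the set of paths in the open list ending at $u$; if some $P'\in\mathcal P$ dominates $P^u$ or $P^u$ contains a cycle, skip $u$; otherwise delete from the open list all tuples whose path $P'$ ends at $u$ and is dominated by $P^u$, compute $c^{\max}(P^u)=\max_i w_i f_i(P^u)+\rho\sum_i f_i(P^u)$, and add $(c^{\max}(P^u),u,P^u)$ to the open list. If the open list becomes empty, return failure.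
   Context: A path is a sequence of distinct vertices consecutive pairs of which are edges of $G$. A path $P'$ dominates $P$ if $f_i(P')\le f_i(P)$ for all $i$ with strict inequality for some $i$. Monotonicity of $\beta$: extending a path never decreases any $f_i$, and whenever $f_i(P')\le f_i(P)$ for two paths ending at the same vertex $u$, then $f_i(P'\cup Q)\le f_i(P\cup Q)$ for every continuation $Q$ starting at $u$. *)

theory Defs
  imports Complex_Main
begin

definition is_path :: "('v \<Rightarrow> 'v \<Rightarrow> bool) \<Rightarrow> 'v list \<Rightarrow> bool" where
  "is_path E P \<longleftrightarrow> P \<noteq> [] \<and> distinct P \<and> (\<forall>k. Suc k < length P \<longrightarrow> E (P ! k) (P ! Suc k))"

definition st_path :: "('v \<Rightarrow> 'v \<Rightarrow> bool) \<Rightarrow> 'v \<Rightarrow> 'v \<Rightarrow> 'v list \<Rightarrow> bool" where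
  "st_path E s g P \<longleftrightarrow> is_path E P \<and> hd P = s \<and> last P = g"

definition pcost :: "(real list \<Rightarrow> real) \<Rightarrow> (nat \<Rightarrow> 'v \<Rightarrow> 'v \<Rightarrow> real) \<Rightarrow> nat \<Rightarrow> 'v list \<Rightarrow> real" where
  "pcost \<beta> f' i P = \<beta> (map (\<lambda>(a, b). f' i a b) (zip P (tl P)))"

definition dominates :: "nat \<Rightarrow> (nat \<Rightarrow> 'v list \<Rightarrow> real) \<Rightarrow> 'v list \<Rightarrow> 'v list \<Rightarrow> bool" where
  "dominates n f P' P \<longleftrightarrow> (\<forall>i<n. f i P' \<le> f i P) \<and> (\<exists>i<n. f i P' < f i P)"

definition cmax :: "nat \<Rightarrow> (nat \<Rightarrow> 'v list \<Rightarrow> real) \<Rightarrow> (nat \<Rightarrow> real) \<Rightarrow> real \<Rightarrow> 'v list \<Rightarrow> real" where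
  "cmax n f w \<rho> P = Max ((\<lambda>i. w i * f i P) ` {..<n}) + \<rho> * (\<Sum>i<n. f i P)"

type_synonym 'v openlist = "(real \<times> 'v \<times> 'v list) list"

definition process_nb ::
  "nat \<Rightarrow> (nat \<Rightarrow> 'v list \<Rightarrow> real) \<Rightarrow> (nat \<Rightarrow> real) \<Rightarrow> real \<Rightarrow> 'v list \<Rightarrow> 'v \<Rightarrow> 'v openlist \<Rightarrow> 'v openlist" where
  "process_nb n f w \<rho> P u OL =
     (let Pu = P @ [u] in
      if (\<exists>(c, x, P') \<in> set OL. last P' = u \<and> dominates n f P' Pu) \<or> \<not> distinct Pu then OL
      else filter (\<lambda>(c, x, P'). \<not> (last P' = u \<and> dominates n f Pu P')) OL @ [(cmax n f w \<rho> Pu, u, Pu)])"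

definition min_entry :: "'v openlist \<Rightarrow> (real \<times> 'v \<times> 'v list) \<Rightarrow> bool" where
  "min_entry OL t \<longleftrightarrow> t \<in> set OL \<and> (\<forall>t' \<in> set OL. fst t \<le> fst t')"

(* One iteration of the while loop that does not return: remove a minimum-cost tuple (c,v,P)
   with v \<noteq> g and process all neighbours of v (in an arbitrary order ns). *)
inductive mmcp_step ::
  "('v \<Rightarrow> 'v \<Rightarrow> bool) \<Rightarrow> 'v \<Rightarrow> nat \<Rightarrow> (nat \<Rightarrow> 'v list \<Rightarrow> real) \<Rightarrow> (nat \<Rightarrow> real) \<Rightarrow> real
   \<Rightarrow> 'v openlist \<Rightarrow> 'v openlist \<Rightarrow> bool"
  for E g n f w \<rho> where
  "\<lbrakk> min_entry OL (c, v, P); v \<noteq> g; distinct ns; set ns = {u. E v u} \<rbrakk> \<Longrightarrow>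
   mmcp_step E g n f w \<rho> OL (fold (process_nb n f w \<rho> P) ns (remove1 (c, v, P) OL))"

(* Result of the algorithm at a state where it stops: None = failure (empty open list),
   Some P = returned path (a minimum-cost tuple whose vertex is g was removed). *)
inductive mmcp_result :: "'v \<Rightarrow> 'v openlist \<Rightarrow> 'v list option \<Rightarrow> bool" for g where
  "mmcp_result g [] None"
| "min_entry OL (c, g, P) \<Longrightarrow> mmcp_result g OL (Some P)"

end

theory Submission
  imports Defs
begin


lemma succ_nth: "successively E P \<longleftrightarrow> (\<forall>k. Suc k < length P \<longrightarrow> E (P ! k) (P ! Suc k))"
proof (induction P)
  case Nil then show ?case by simp
next
  case (Cons x xs)
  show ?case
  proof (cases xs)
    case Nil then show ?thesis by simp
  next
    case (Cons y ys)
    have "(\<forall>k. Suc k < length (x#xs) \<longrightarrow> E ((x#xs) ! k) ((x#xs) ! Suc k)) \<longleftrightarrow>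
          E x y \<and> (\<forall>k. Suc k < length xs \<longrightarrow> E (xs ! k) (xs ! Suc k))"
      (is "?L \<longleftrightarrow> ?R")
    proof
      assume L: ?L
      have "E x y" using L[rule_format, of 0] Cons by simp
      moreover have "\<forall>k. Suc k < length xs \<longrightarrow> E (xs ! k) (xs ! Suc k)"
        using L by (metis Suc_less_eq length_Cons nth_Cons_Suc)
      ultimately show ?R by blast
    next
      assume R: ?R
      show ?L
      proof (intro allI impI)
        fix k assume "Suc k < length (x#xs)"
        then show "E ((x#xs) ! k) ((x#xs) ! Suc k)"
          using R Cons by (cases k) auto
      qed
    qed
    then show ?thesis using Cons.IH Cons by simp
  qed
qed

lemma is_path_alt: "is_path E P \<longleftrightarrow> P \<noteq> [] \<and> distinct P \<and> successively E P"
  unfolding is_path_def succ_nth by blast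

lemma is_path_single[simp]: "is_path E [x]"
  by (simp add: is_path_alt)

lemma is_path_append:
  "is_path E (xs @ ys) \<longleftrightarrow> (xs = [] \<longrightarrow> is_path E ys) \<and> (ys = [] \<longrightarrow> is_path E xs) \<and>
     (xs \<noteq> [] \<and> ys \<noteq> [] \<longrightarrow> is_path E xs \<and> is_path E ys \<and> set xs \<inter> set ys = {} \<and> E (last xs) (hd ys))"
  by (auto simp: is_path_alt successively_append_iff)

lemma is_path_prefix: "is_path E (xs @ ys) \<Longrightarrow> xs \<noteq> [] \<Longrightarrow> is_path E xs"
  by (auto simp: is_path_append)

lemma is_path_suffix: "is_path E (xs @ ys) \<Longrightarrow> ys \<noteq> [] \<Longrightarrow> is_path E ys"
  by (auto simp: is_path_append)

lemma is_path_glue: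
  "is_path E (xs @ [x]) \<Longrightarrow> is_path E (x # ys) \<Longrightarrow> set xs \<inter> set ys = {} \<Longrightarrow> is_path E (xs @ x # ys)"
  by (auto simp: is_path_alt successively_append_iff successively_Cons)

lemma is_path_snoc:
  "is_path E xs \<Longrightarrow> E (last xs) u \<Longrightarrow> u \<notin> set xs \<Longrightarrow> is_path E (xs @ [u])"
  by (auto simp: is_path_append)

lemma path_exists:
  assumes "E\<^sup>*\<^sup>* x y" shows "\<exists>P. is_path E P \<and> hd P = x \<and> last P = y"
  using assms
proof (induction rule: converse_rtranclp_induct)
  case base
  then show ?case by (intro exI[of _ "[y]"]) simp
next
  case (step x z)
  then obtain Q where Q: "is_path E Q" "hd Q = z" "last Q = y" by blast
  show ?case
  proof (cases "x \<in> set Q")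
    case True
    then obtain A B where AB: "Q = A @ x # B" by (meson split_list)
    then have "is_path E (x # B)" using Q(1) is_path_suffix by fastforce
    then show ?thesis using Q AB by (intro exI[of _ "x # B"]) auto
  next
    case False
    have "Q \<noteq> []" using Q(1) by (simp add: is_path_def)
    then have "is_path E ([x] @ Q)" using Q step(1) False by (subst is_path_append) auto
    then show ?thesis using Q \<open>Q \<noteq> []\<close> by (intro exI[of _ "x # Q"]) auto
  qed
qed

lemma is_path_set:
  assumes "is_path E P" "hd P \<in> V" "\<And>x y. E x y \<Longrightarrow> x \<in> V \<and> y \<in> V"
  shows "set P \<subseteq> V"
proof
  fix x assume "x \<in> set P"
  then obtain k where k: "k < length P" "P ! k = x" by (meson in_set_conv_nth)
  show "x \<in> V"
  proof (cases k)
    case 0 then show ?thesis using k assms(1,2) by (simp add: hd_conv_nth is_path_def)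
  next
    case (Suc j)
    then have "E (P ! j) (P ! Suc j)" using assms(1) k unfolding is_path_def by blast
    then show ?thesis using assms(3) k Suc by blast
  qed
qed



definition pth :: "real \<times> 'v \<times> 'v list \<Rightarrow> 'v list" where "pth t = snd (snd t)"
definition pths :: "'v openlist \<Rightarrow> 'v list set" where "pths OL = pth ` set OL"

lemma pth_simp[simp]: "pth (c, v, P) = P" by (simp add: pth_def)

lemma distinct_map_remove1: "distinct (map h xs) \<Longrightarrow> distinct (map h (remove1 x xs))"
  by (induction xs) (auto dest: subsetD[OF set_remove1_subset])

lemma notin_remove1: "distinct (map h xs) \<Longrightarrow> x \<in> set xs \<Longrightarrow> h x \<notin> h ` set (remove1 x xs)"
  by (induction xs) (auto dest: subsetD[OF set_remove1_subset], metis image_eqI)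

lemma prefix_snoc: "A @ B = P @ [u] \<Longrightarrow> B \<noteq> [] \<Longrightarrow> \<exists>B'. B = B' @ [u] \<and> P = A @ B'"
  by (cases B rule: rev_exhaust) auto

lemma dom_le: "dominates n f A B \<Longrightarrow> \<forall>i<n. f i A \<le> f i B"
  by (simp add: dominates_def)

lemma pn_set: "set (process_nb n f w \<rho> P u OL) \<subseteq> set OL \<union> {(cmax n f w \<rho> (P@[u]), u, P@[u]) |u. u \<in> set ns \<and> distinct (P@[u])}"
  if "u \<in> set ns"
  using that by (auto simp: process_nb_def Let_def)

lemma fold_set: "set (fold (process_nb n f w \<rho> P) ns OL) \<subseteq> set OL \<union> {(cmax n f w \<rho> (P@[u]), u, P@[u]) |u. u \<in> set ns \<and> distinct (P@[u])}"
proof (induction ns arbitrary: OL)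
  case Nil then show ?case by simp
next
  case (Cons a ns)
  have "set (process_nb n f w \<rho> P a OL) \<subseteq> set OL \<union> {(cmax n f w \<rho> (P@[u]), u, P@[u]) |u. u \<in> set (a#ns) \<and> distinct (P@[u])}"
    by (rule pn_set) simp
  moreover have "set (fold (process_nb n f w \<rho> P) ns (process_nb n f w \<rho> P a OL)) \<subseteq> set (process_nb n f w \<rho> P a OL) \<union> {(cmax n f w \<rho> (P@[u]), u, P@[u]) |u. u \<in> set ns \<and> distinct (P@[u])}"
    by (rule Cons.IH)
  ultimately show ?case by auto
qed

definition cov :: "nat \<Rightarrow> (nat \<Rightarrow> 'v list \<Rightarrow> real) \<Rightarrow> 'v openlist \<Rightarrow> 'v \<Rightarrow> 'v list \<Rightarrow> bool" where
  "cov n f OL u Y \<longleftrightarrow> (\<exists>t\<in>set OL. last (pth t) = u \<and> (\<forall>i<n. f i (pth t) \<le> f i Y))"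

lemma pn_cov: "cov n f OL u0 Y \<Longrightarrow> cov n f (process_nb n f w \<rho> P u OL) u0 Y"
proof -
  assume "cov n f OL u0 Y"
  then obtain t where t: "t \<in> set OL" "last (pth t) = u0" "\<forall>i<n. f i (pth t) \<le> f i Y"
    by (auto simp: cov_def)
  obtain c x Q where tq: "t = (c, x, Q)" by (cases t) auto
  show ?thesis
  proof (cases "(\<exists>(c, x, P') \<in> set OL. last P' = u \<and> dominates n f P' (P@[u])) \<or> \<not> distinct (P@[u])")
    case True
    then show ?thesis using t by (auto simp: process_nb_def Let_def cov_def)
  next
    case False
    note F = False
    show ?thesis
    proof (cases "last Q = u \<and> dominates n f (P@[u]) Q")
      case True
      then have "\<forall>i<n. f i (P@[u]) \<le> f i Y" using t tq dom_le by fastforce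
      then show ?thesis using F True t tq
        by (simp add: process_nb_def Let_def cov_def)
    next
      case False
      then have "t \<in> set (process_nb n f w \<rho> P u OL)" using F t tq
        by (simp add: process_nb_def Let_def)
      then show ?thesis using t by (auto simp: cov_def)
    qed
  qed
qed

lemma fold_cov: "cov n f OL u0 Y \<Longrightarrow> cov n f (fold (process_nb n f w \<rho> P) ns OL) u0 Y"
  by (induction ns arbitrary: OL) (auto intro: pn_cov)

lemma pn_cov_new: "distinct (P@[u]) \<Longrightarrow> cov n f (process_nb n f w \<rho> P u OL) u (P@[u])"
proof (cases "\<exists>(c, x, P') \<in> set OL. last P' = u \<and> dominates n f P' (P@[u])")
  case True
  then obtain c x P' where "(c,x,P') \<in> set OL" "last P' = u" "dominates n f P' (P@[u])" by auto
  then show ?thesis using True by (auto simp: process_nb_def Let_def cov_def dest!: dom_le intro!: bexI[where x="(c,x,P')"])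
next
  case False
  assume d: "distinct (P@[u])"
  show ?thesis using False d unfolding process_nb_def Let_def cov_def
    by (auto intro!: bexI[where x="(cmax n f w \<rho> (P@[u]), u, P@[u])"])
qed

lemma fold_cov_new: "\<forall>u\<in>set ns. distinct (P@[u]) \<longrightarrow> cov n f (fold (process_nb n f w \<rho> P) ns OL) u (P@[u])"
proof (induction ns arbitrary: OL)
  case Nil then show ?case by simp
next
  case (Cons a ns)
  show ?case
  proof (intro ballI impI)
    fix u assume u: "u \<in> set (a#ns)" "distinct (P@[u])"
    show "cov n f (fold (process_nb n f w \<rho> P) (a#ns) OL) u (P@[u])"
    proof (cases "u = a")
      case True
      then show ?thesis using u by (simp add: fold_cov pn_cov_new)
    next
      case False
      then show ?thesis using u Cons.IH by simp
    qed
  qed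
qed

lemma pn_pths: "pths (process_nb n f w \<rho> P u OL) \<subseteq> pths OL \<union> {P@[u]}"
  by (auto simp: process_nb_def Let_def pths_def)

lemma pn_distinct: "distinct (map pth OL) \<Longrightarrow> P@[u] \<notin> pths OL \<Longrightarrow> distinct (map pth (process_nb n f w \<rho> P u OL))"
  by (auto simp: process_nb_def Let_def pths_def distinct_map_filter)

lemma fold_distinct:
  "distinct ns \<Longrightarrow> distinct (map pth OL) \<Longrightarrow> (\<forall>u\<in>set ns. P@[u] \<notin> pths OL) \<Longrightarrow>
   distinct (map pth (fold (process_nb n f w \<rho> P) ns OL)) \<and>
   pths (fold (process_nb n f w \<rho> P) ns OL) \<subseteq> pths OL \<union> (\<lambda>u. P@[u]) ` set ns"
proof (induction ns arbitrary: OL)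
  case Nil then show ?case by simp
next
  case (Cons a ns)
  let ?OL1 = "process_nb n f w \<rho> P a OL"
  have d1: "distinct (map pth ?OL1)" using Cons.prems by (intro pn_distinct) auto
  have s1: "pths ?OL1 \<subseteq> pths OL \<union> {P@[a]}" by (rule pn_pths)
  have "\<forall>u\<in>set ns. P@[u] \<notin> pths ?OL1" using Cons.prems s1 by auto
  then have "distinct (map pth (fold (process_nb n f w \<rho> P) ns ?OL1)) \<and>
   pths (fold (process_nb n f w \<rho> P) ns ?OL1) \<subseteq> pths ?OL1 \<union> (\<lambda>u. P@[u]) ` set ns"
    using Cons.IH Cons.prems d1 by simp
  then show ?case using s1 by auto
qed



locale mm =
  fixes V :: "'v set" and E :: "'v \<Rightarrow> 'v \<Rightarrow> bool" and s g :: 'v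
    and n :: nat and f :: "nat \<Rightarrow> 'v list \<Rightarrow> real" and w :: "nat \<Rightarrow> real" and \<rho> :: real
  assumes edges_in: "\<And>x y. E x y \<Longrightarrow> x \<in> V \<and> y \<in> V"
    and sV: "s \<in> V"
    and n_pos: "n \<ge> 1"
    and mono_ext: "\<And>i P Q. i < n \<Longrightarrow> is_path E P \<Longrightarrow> is_path E (P @ Q) \<Longrightarrow> f i P \<le> f i (P @ Q)"
    and mono_cont: "\<And>i P P' Q. i < n \<Longrightarrow> is_path E P \<Longrightarrow> is_path E P' \<Longrightarrow> last P = last P'
        \<Longrightarrow> is_path E Q \<Longrightarrow> hd Q = last P \<Longrightarrow> f i P' \<le> f i P
        \<Longrightarrow> f i (P' @ tl Q) \<le> f i (P @ tl Q)"
    and w_range: "\<And>i. i < n \<Longrightarrow> 0 \<le> w i \<and> w i \<le> 1"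
    and rho_pos: "\<rho> > 0"
begin

abbreviation "cm \<equiv> cmax n f w \<rho>"

lemma cmax_mono:
  assumes "\<forall>i<n. f i A \<le> f i B" shows "cm A \<le> cm B"
proof -
  have ne: "{..<n} \<noteq> {}" using n_pos by (metis emptyE lessThan_iff less_le_trans zero_less_one)
  have "Max ((\<lambda>i. w i * f i A) ` {..<n}) \<le> Max ((\<lambda>i. w i * f i B) ` {..<n})"
  proof (rule Max.boundedI)
    show "finite ((\<lambda>i. w i * f i A) ` {..<n})" by simp
    show "(\<lambda>i. w i * f i A) ` {..<n} \<noteq> {}" using ne by simp
    fix a assume "a \<in> (\<lambda>i. w i * f i A) ` {..<n}"
    then obtain i where i: "i < n" "a = w i * f i A" by auto
    have "a \<le> w i * f i B" using i assms w_range[of i] by (simp add: mult_left_mono)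
    also have "\<dots> \<le> Max ((\<lambda>i. w i * f i B) ` {..<n})" using i by (intro Max_ge) auto
    finally show "a \<le> Max ((\<lambda>i. w i * f i B) ` {..<n})" .
  qed
  moreover have "(\<Sum>i<n. f i A) \<le> (\<Sum>i<n. f i B)" using assms by (intro sum_mono) auto
  then have "\<rho> * (\<Sum>i<n. f i A) \<le> \<rho> * (\<Sum>i<n. f i B)" using rho_pos by simp
  ultimately show ?thesis by (simp add: cmax_def)
qed

definition inv :: "'v openlist \<Rightarrow> 'v list set \<Rightarrow> bool" where
  "inv OL K \<longleftrightarrow>
    (\<forall>(c,v,P)\<in>set OL. is_path E P \<and> hd P = s \<and> v = last P \<and> (c = cm P \<or> OL = [(0,s,[s])])) \<and>
    (\<forall>P\<in>K. is_path E P \<and> hd P = s \<and> last P \<noteq> g) \<and>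
    (\<forall>P\<in>pths OL \<union> K. \<forall>A B. P = A @ B \<and> A \<noteq> [] \<and> B \<noteq> [] \<longrightarrow> A \<in> K) \<and>
    (\<forall>Y\<in>K. \<forall>u. E (last Y) u \<and> u \<notin> set Y \<longrightarrow>
        (\<exists>P'\<in>pths OL \<union> K. last P' = u \<and> (\<forall>i<n. f i P' \<le> f i (Y@[u])))) \<and>
    distinct (map pth OL) \<and> pths OL \<inter> K = {} \<and> [s] \<in> pths OL \<union> K"

lemma inv_init: "inv [(0,s,[s])] {}"
  by (auto simp: inv_def pths_def Cons_eq_append_conv)

lemma inv_step:
  assumes I: "inv OL K" and st: "mmcp_step E g n f w \<rho> OL OL'"
  shows "\<exists>P. P \<notin> K \<and> inv OL' (insert P K)"
  using st
proof cases
  case (1 c v P ns)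
  let ?OL0 = "remove1 (c, v, P) OL"
  let ?K' = "insert P K"
  have me: "(c,v,P) \<in> set OL" "\<forall>t\<in>set OL. c \<le> fst t" using 1 by (auto simp: min_entry_def)
  have I1: "\<forall>(c,v,P)\<in>set OL. is_path E P \<and> hd P = s \<and> v = last P \<and> (c = cm P \<or> OL = [(0,s,[s])])"
   and I2: "\<forall>P\<in>K. is_path E P \<and> hd P = s \<and> last P \<noteq> g"
   and I3: "\<forall>P\<in>pths OL \<union> K. \<forall>A B. P = A @ B \<and> A \<noteq> [] \<and> B \<noteq> [] \<longrightarrow> A \<in> K"
   and I4: "\<forall>Y\<in>K. \<forall>u. E (last Y) u \<and> u \<notin> set Y \<longrightarrow>
        (\<exists>P'\<in>pths OL \<union> K. last P' = u \<and> (\<forall>i<n. f i P' \<le> f i (Y@[u])))"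
   and I5: "distinct (map pth OL)" "pths OL \<inter> K = {}"
   and I6: "[s] \<in> pths OL \<union> K"
    using I by (auto simp: inv_def)
  have Pp: "is_path E P" "hd P = s" "v = last P" using I1 me(1) by auto
  have PinOL: "P \<in> pths OL" using me(1) unfolding pths_def by force
  have PnK: "P \<notin> K" using PinOL I5 by auto
  have Pne: "P \<noteq> []" using Pp by (simp add: is_path_def)
  have OL0sub: "set ?OL0 \<subseteq> set OL" by (rule set_remove1_subset)
  have Pn0: "P \<notin> pths ?OL0" using notin_remove1[OF I5(1) me(1)] by (simp add: pths_def)
  have d0: "distinct (map pth ?OL0)" using I5(1) by (rule distinct_map_remove1)
  have newnK: "P@[u] \<notin> K" for u
    using I3 PnK by (metis Pne append_is_Nil_conv not_Cons_self2 UnI2)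
  have newnOL: "P@[u] \<notin> pths OL" for u
  proof
    assume "P@[u] \<in> pths OL"
    then have "P \<in> K" using I3 Pne by blast
    then show False using PnK by simp
  qed
  have FD: "distinct (map pth OL') \<and> pths OL' \<subseteq> pths ?OL0 \<union> (\<lambda>u. P@[u]) ` set ns"
    unfolding 1(1) using 1(4) d0 newnOL OL0sub unfolding pths_def
    by (intro fold_distinct[unfolded pths_def]) auto
  have FS: "set OL' \<subseteq> set ?OL0 \<union> {(cm (P@[u]), u, P@[u]) |u. u \<in> set ns \<and> distinct (P@[u])}"
    unfolding 1(1) by (rule fold_set)
  have ns_edge: "u \<in> set ns \<Longrightarrow> E (last P) u" for u using 1(5) Pp(3) by auto
  have J1: "\<forall>(c',v',P')\<in>set OL'. is_path E P' \<and> hd P' = s \<and> v' = last P' \<and> (c' = cm P' \<or> OL' = [(0,s,[s])])"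
  proof (intro ballI, clarify)
    fix c' v' P' assume t: "(c', v', P') \<in> set OL'"
    then consider "(c', v', P') \<in> set ?OL0" | u where "c' = cm (P@[u])" "v' = u" "P' = P@[u]" "u \<in> set ns" "distinct (P@[u])"
      using FS by blast
    then show "is_path E P' \<and> hd P' = s \<and> v' = last P' \<and> (c' = cm P' \<or> OL' = [(0,s,[s])])"
    proof cases
      case 1
      then have inOL: "(c', v', P') \<in> set OL" using OL0sub by blast
      have "OL \<noteq> [(0,s,[s])]" using 1 me(1) by auto
      then show ?thesis using I1 inOL by fastforce
    next
      case 2
      have "is_path E (P@[u])" using Pp 2 ns_edge by (intro is_path_snoc) auto
      then show ?thesis using 2 Pp Pne by simp
    qed
  qed
  have J2: "\<forall>Q\<in>?K'. is_path E Q \<and> hd Q = s \<and> last Q \<noteq> g" using I2 Pp 1(3) by auto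
  have p0: "pths ?OL0 \<subseteq> pths OL" unfolding pths_def using OL0sub by (rule image_mono)
  have subOL': "Q \<in> pths ?OL0 \<or> (\<exists>u. Q = P @ [u])" if "Q \<in> pths OL'" for Q
    using that FD by blast
  have J3: "\<forall>Q\<in>pths OL' \<union> ?K'. \<forall>A B. Q = A @ B \<and> A \<noteq> [] \<and> B \<noteq> [] \<longrightarrow> A \<in> ?K'"
  proof (intro ballI allI impI)
    fix Q A B assume Q: "Q \<in> pths OL' \<union> ?K'" and AB: "Q = A @ B \<and> A \<noteq> [] \<and> B \<noteq> []"
    have "Q \<in> pths OL \<union> K \<or> (\<exists>u. Q = P @ [u])"
      using Q subOL' p0 PinOL by blast
    then show "A \<in> ?K'"
    proof
      assume "Q \<in> pths OL \<union> K" then show ?thesis using I3 AB by blast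
    next
      assume "\<exists>u. Q = P @ [u]"
      then obtain u where "Q = P @ [u]" by blast
      then obtain B' where "B = B' @ [u]" "P = A @ B'" using prefix_snoc AB by metis
      then show ?thesis using I3 PinOL AB by (cases "B' = []") auto
    qed
  qed
  have covtrans: "\<exists>P'\<in>pths OL' \<union> ?K'. last P' = u \<and> (\<forall>i<n. f i P' \<le> f i Yb)"
    if "\<exists>P'\<in>pths OL \<union> K. last P' = u \<and> (\<forall>i<n. f i P' \<le> f i Yb)" for u Yb
  proof -
    from that obtain P' where P': "P' \<in> pths OL \<union> K" "last P' = u" "\<forall>i<n. f i P' \<le> f i Yb" by blast
    show ?thesis
    proof (cases "P' \<in> K \<or> P' = P")
      case True then show ?thesis using P' by blast
    next
      case False
      then obtain t where t: "t \<in> set OL" "pth t = P'" using P' unfolding pths_def by blast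
      then have "t \<noteq> (c,v,P)" using False by auto
      then have "t \<in> set ?OL0" using t by (simp add: in_set_remove1)
      then have "cov n f ?OL0 u Yb" using t P' by (auto simp: cov_def)
      then have "cov n f OL' u Yb" unfolding 1(1) by (rule fold_cov)
      then show ?thesis unfolding cov_def pths_def by blast
    qed
  qed
  have J4: "\<forall>Y\<in>?K'. \<forall>u. E (last Y) u \<and> u \<notin> set Y \<longrightarrow>
        (\<exists>P'\<in>pths OL' \<union> ?K'. last P' = u \<and> (\<forall>i<n. f i P' \<le> f i (Y@[u])))"
  proof (intro ballI allI impI)
    fix Y u assume Y: "Y \<in> ?K'" and u: "E (last Y) u \<and> u \<notin> set Y"
    show "\<exists>P'\<in>pths OL' \<union> ?K'. last P' = u \<and> (\<forall>i<n. f i P' \<le> f i (Y@[u]))"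
    proof (cases "Y = P")
      case False
      then have "Y \<in> K" using Y by simp
      then show ?thesis using I4 u by (intro covtrans) blast
    next
      case True
      have "u \<in> set ns" using 1(5) u True Pp(3) by auto
      moreover have "distinct (P@[u])" using u True Pp(1) by (simp add: is_path_def)
      ultimately have "cov n f OL' u (P@[u])" unfolding 1(1) using fold_cov_new[where ns=ns and P=P and OL="?OL0" and n=n and f=f and w=w and \<rho>=\<rho>] by blast
      then show ?thesis unfolding cov_def pths_def True by blast
    qed
  qed
  have J5: "pths OL' \<inter> ?K' = {}"
  proof (rule ccontr)
    assume "pths OL' \<inter> ?K' \<noteq> {}"
    then obtain Q where Q: "Q \<in> pths OL'" "Q \<in> ?K'" by blast
    from subOL'[OF Q(1)] show False
    proof
      assume "Q \<in> pths ?OL0"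
      then show False using Q(2) Pn0 p0 I5(2) by blast
    next
      assume "\<exists>u. Q = P @ [u]"
      then obtain u where "Q = P @ [u]" by blast
      then show False using Q(2) newnK by simp
    qed
  qed
  have J6: "[s] \<in> pths OL' \<union> ?K'"
  proof (cases "P = [s]")
    case True then show ?thesis by simp
  next
    case False
    then obtain B where "P = [s] @ B" "B \<noteq> []" using Pp Pne by (cases P) auto
    then show ?thesis using I3 PinOL by blast
  qed
  have "inv OL' ?K'" unfolding inv_def using J1 J2 J3 J4 J5 J6 FD by blast
  then show ?thesis using PnK by blast
qed

end


context mm begin

lemma witness:
  assumes I: "inv OL K"
  shows "Y \<in> pths OL \<union> K \<Longrightarrow> is_path E (Y @ T) \<Longrightarrow> last (Y @ T) = g \<Longrightarrow> cm (Y @ T) \<le> B \<Longrightarrow>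
     \<exists>t\<in>set OL. \<exists>T'. is_path E (pth t @ T') \<and> cm (pth t @ T') \<le> B"
proof (induction "length T" arbitrary: Y T rule: less_induct)
  case less
  have I1: "\<forall>(c,v,P)\<in>set OL. is_path E P \<and> hd P = s \<and> v = last P \<and> (c = cm P \<or> OL = [(0,s,[s])])"
   and I2: "\<forall>P\<in>K. is_path E P \<and> hd P = s \<and> last P \<noteq> g"
   and I3: "\<forall>P\<in>pths OL \<union> K. \<forall>A B. P = A @ B \<and> A \<noteq> [] \<and> B \<noteq> [] \<longrightarrow> A \<in> K"
   and I4: "\<forall>Y\<in>K. \<forall>u. E (last Y) u \<and> u \<notin> set Y \<longrightarrow>
        (\<exists>P'\<in>pths OL \<union> K. last P' = u \<and> (\<forall>i<n. f i P' \<le> f i (Y@[u])))"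
    using I by (auto simp: inv_def)
  have pathOK: "is_path E Q" if "Q \<in> pths OL \<union> K" for Q
    using that I1 I2 unfolding pths_def pth_def by auto
  show ?case
  proof (cases "Y \<in> pths OL")
    case True
    then obtain t where "t \<in> set OL" "pth t = Y" unfolding pths_def by blast
    then show ?thesis using less.prems by blast
  next
    case False
    then have YK: "Y \<in> K" using less.prems by blast
    then have Yp: "is_path E Y" "last Y \<noteq> g" using I2 by auto
    have Yne: "Y \<noteq> []" using Yp by (simp add: is_path_def)
    have "T \<noteq> []" using less.prems(3) Yp(2) by auto
    then obtain u T2 where T: "T = u # T2" by (cases T) auto
    have p_all: "is_path E ((Y @ [u]) @ T2)" using less.prems(2) T by simp
    have pYu: "is_path E (Y @ [u])" using p_all by (rule is_path_prefix) simp
    have eu: "E (last Y) u" "u \<notin> set Y" using pYu Yne by (auto simp: is_path_append)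
    have puT2: "is_path E (u # T2)" using p_all is_path_suffix[of E Y "u # T2"] by simp
    have uT2: "u \<notin> set T2" using puT2 by (simp add: is_path_def)
    from I4 YK eu obtain P' where P': "P' \<in> pths OL \<union> K" "last P' = u" "\<forall>i<n. f i P' \<le> f i (Y@[u])"
      by blast
    have pP': "is_path E P'" using pathOK P'(1) .
    have P'ne: "P' \<noteq> []" using pP' by (simp add: is_path_def)
    show ?thesis
    proof (cases "set P' \<inter> set T2 = {}")
      case True
      have "P' = butlast P' @ [last P']" using P'ne by simp
      then obtain P0 where P'split: "P' = P0 @ [u]" using P'(2) by metis
      have "set P0 \<subseteq> set P'" using P'split by auto
      then have dj: "set P0 \<inter> set T2 = {}" using True by blast
      have pP0: "is_path E (P0 @ [u])" using pP' P'split by simp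
      have "is_path E (P0 @ u # T2)" using pP0 puT2 dj by (rule is_path_glue)
      then have pnew: "is_path E (P' @ T2)" using P'split by simp
      have "\<forall>i<n. f i (P' @ T2) \<le> f i ((Y @ [u]) @ T2)"
      proof (intro allI impI)
        fix i assume i: "i < n"
        have lst: "last (Y @ [u]) = last P'" using P'(2) by simp
        have hdq: "hd (u # T2) = last (Y @ [u])" by simp
        have le: "f i P' \<le> f i (Y @ [u])" using P'(3) i by blast
        have "f i (P' @ tl (u # T2)) \<le> f i ((Y @ [u]) @ tl (u # T2))"
          using mono_cont[OF i pYu pP' lst puT2 hdq le] .
        then show "f i (P' @ T2) \<le> f i ((Y @ [u]) @ T2)" by simp
      qed
      then have "cm (P' @ T2) \<le> cm ((Y @ [u]) @ T2)" by (rule cmax_mono)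
      then have c1: "cm (P' @ T2) \<le> B" using T less.prems(4) by simp
      have l1: "last (P' @ T2) = g" using less.prems(3) T P'(2) by (cases "T2 = []") auto
      have "length T2 < length T" using T by simp
      from less.hyps[OF this P'(1) pnew l1 c1] show ?thesis .
    next
      case False
      then have "\<exists>z\<in>set T2. z \<in> set P'" by blast
      then obtain C x D where CD: "T2 = C @ x # D" "x \<in> set P'" "\<forall>z\<in>set D. z \<notin> set P'"
        using split_list_last_prop[of T2 "\<lambda>z. z \<in> set P'"] by blast
      obtain A B0 where AB: "P' = A @ x # B0" using CD(2) by (meson split_list)
      have xu: "x \<noteq> u" using uT2 CD(1) by auto
      have B0ne: "B0 \<noteq> []" using AB P'(2) xu by auto
      have AB': "P' = (A @ [x]) @ B0" using AB by simp
      have AxK: "A @ [x] \<in> K" using I3 P'(1) AB' B0ne by blast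
      have pAx: "is_path E (A @ [x])" using pP' AB' by (intro is_path_prefix[of E "A @ [x]" B0]) simp_all
      have pxD: "is_path E (x # D)" using puT2 CD(1) is_path_suffix[of E "u # C" "x # D"] by simp
      have pYC: "is_path E ((Y @ [u]) @ (C @ [x]))"
        using p_all CD(1) is_path_prefix[of E "(Y @ [u]) @ (C @ [x])" D] by simp
      have dAD: "set A \<inter> set D = {}" using CD(3) AB by auto
      have pnew0: "is_path E (A @ x # D)" using pAx pxD dAD by (rule is_path_glue)
      have pnew: "is_path E ((A @ [x]) @ D)" using pnew0 by simp
      have "\<forall>i<n. f i ((A @ [x]) @ D) \<le> f i ((Y @ [u] @ C @ [x]) @ D)"
      proof (intro allI impI)
        fix i assume i: "i < n"
        have "f i (A @ [x]) \<le> f i ((A @ [x]) @ B0)" using mono_ext[OF i pAx] pP' AB' by simp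
        also have "\<dots> = f i P'" using AB' by simp
        also have "\<dots> \<le> f i (Y @ [u])" using P'(3) i by blast
        also have "\<dots> \<le> f i ((Y @ [u]) @ (C @ [x]))" using mono_ext[OF i pYu pYC] .
        finally have le: "f i (A @ [x]) \<le> f i (Y @ [u] @ C @ [x])" by simp
        have pYC': "is_path E (Y @ [u] @ C @ [x])" using pYC by simp
        have lst: "last (Y @ [u] @ C @ [x]) = last (A @ [x])" by simp
        have hdq: "hd (x # D) = last (Y @ [u] @ C @ [x])" by simp
        have "f i ((A @ [x]) @ tl (x # D)) \<le> f i ((Y @ [u] @ C @ [x]) @ tl (x # D))"
          using mono_cont[OF i pYC' pAx lst pxD hdq le] .
        then show "f i ((A @ [x]) @ D) \<le> f i ((Y @ [u] @ C @ [x]) @ D)" by simp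
      qed
      then have "cm ((A @ [x]) @ D) \<le> cm ((Y @ [u] @ C @ [x]) @ D)" by (rule cmax_mono)
      moreover have "(Y @ [u] @ C @ [x]) @ D = Y @ T" using T CD(1) by simp
      ultimately have c1: "cm ((A @ [x]) @ D) \<le> B" using less.prems(4) by simp
      have "last ((A @ [x]) @ D) = last (Y @ T)" using T CD(1) by (cases "D = []") auto
      then have l1: "last ((A @ [x]) @ D) = g" using less.prems(3) by simp
      have "length D < length T" using T CD(1) by simp
      from less.hyps[OF this _ pnew l1 c1] AxK show ?thesis by blast
    qed
  qed
qed

end


lemma distinct_hd_last: "distinct Q \<Longrightarrow> Q \<noteq> [] \<Longrightarrow> hd Q = last Q \<Longrightarrow> Q = [hd Q]"
  by (cases Q) (auto split: if_splits)

context mm begin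

lemma reach_inv: "(mmcp_step E g n f w \<rho>)\<^sup>*\<^sup>* [(0, s, [s])] OL \<Longrightarrow> \<exists>K. inv OL K"
proof (induction rule: rtranclp_induct)
  case base then show ?case using inv_init by blast
next
  case (step y z)
  then obtain K where "inv y K" by blast
  then show ?case using inv_step[OF _ step(2)] by blast
qed

lemma inv_K_sub: "inv OL K \<Longrightarrow> K \<subseteq> {xs. set xs \<subseteq> V \<and> distinct xs}"
proof
  fix P assume "inv OL K" "P \<in> K"
  then have "is_path E P" "hd P = s" by (auto simp: inv_def)
  then show "P \<in> {xs. set xs \<subseteq> V \<and> distinct xs}"
    using is_path_set[of E P V] sV edges_in by (auto simp: is_path_def)
qed

lemma no_infinite:
  assumes finV: "finite V"
  shows "\<nexists>X. X 0 = [(0, s, [s])] \<and> (\<forall>k. mmcp_step E g n f w \<rho> (X k) (X (Suc k)))"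
proof
  assume "\<exists>X. X 0 = [(0, s, [s])] \<and> (\<forall>k. mmcp_step E g n f w \<rho> (X k) (X (Suc k)))"
  then obtain X where X0: "X 0 = [(0, s, [s])]" and XS: "\<And>k. mmcp_step E g n f w \<rho> (X k) (X (Suc k))"
    by blast
  define nxt where "nxt = (\<lambda>k K. SOME K'. \<exists>P. P \<notin> K \<and> K' = insert P K \<and> inv (X (Suc k)) K')"
  define Ks where "Ks = rec_nat {} nxt"
  have Ks0: "Ks 0 = {}" by (simp add: Ks_def)
  have KsS: "Ks (Suc k) = nxt k (Ks k)" for k by (simp add: Ks_def)
  have main: "inv (X k) (Ks k) \<and> finite (Ks k) \<and> card (Ks k) = k" for k
  proof (induction k)
    case 0 then show ?case using X0 Ks0 inv_init by simp
  next
    case (Suc k)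
    then have "\<exists>P. P \<notin> Ks k \<and> inv (X (Suc k)) (insert P (Ks k))" using inv_step XS by blast
    then have "\<exists>K'. \<exists>P. P \<notin> Ks k \<and> K' = insert P (Ks k) \<and> inv (X (Suc k)) K'" by blast
    then have "\<exists>P. P \<notin> Ks k \<and> nxt k (Ks k) = insert P (Ks k) \<and> inv (X (Suc k)) (nxt k (Ks k))"
      unfolding nxt_def by (rule someI_ex)
    then show ?case using Suc.IH KsS by auto
  qed
  let ?F = "{xs. set xs \<subseteq> V \<and> distinct xs}"
  have finF: "finite ?F" using finV by (rule finite_subset_distinct)
  have "card (Ks (Suc (card ?F))) \<le> card ?F"
    using main inv_K_sub finF by (meson card_mono)
  then show False using main by simp
qed

lemma result_ok:
  assumes finV: "finite V" and conn: "E\<^sup>*\<^sup>* s g"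
    and reach: "(mmcp_step E g n f w \<rho>)\<^sup>*\<^sup>* [(0, s, [s])] OL" and res: "mmcp_result g OL res"
  shows "\<exists>P. res = Some P \<and> st_path E s g P \<and> (\<forall>Q. st_path E s g Q \<longrightarrow> cm P \<le> cm Q)"
proof -
  obtain K where I: "inv OL K" using reach_inv[OF reach] by blast
  let ?S = "{Q. st_path E s g Q}"
  have "?S \<subseteq> {xs. set xs \<subseteq> V \<and> distinct xs}"
    using is_path_set[of E _ V] sV edges_in by (auto simp: st_path_def is_path_def)
  then have finS: "finite ?S" using finite_subset_distinct[OF finV] finite_subset by blast
  have neS: "?S \<noteq> {}" using path_exists[OF conn] by (auto simp: st_path_def)
  have "Min (cm ` ?S) \<in> cm ` ?S" using finS neS by (intro Min_in) auto
  then obtain R where R: "st_path E s g R" "Min (cm ` ?S) = cm R" by auto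
  have Rmin: "cm R \<le> cm Q" if "st_path E s g Q" for Q
    using R(2) finS that by (metis (mono_tags, lifting) Min_le finite_imageI image_eqI mem_Collect_eq)
  have Rne: "R \<noteq> []" using R(1) by (simp add: st_path_def is_path_def)
  have RsT: "[s] @ tl R = R" using R(1) Rne by (cases R) (auto simp: st_path_def)
  have sin: "[s] \<in> pths OL \<union> K" using I by (simp add: inv_def)
  have wit: "\<exists>t\<in>set OL. \<exists>T'. is_path E (pth t @ T') \<and> cm (pth t @ T') \<le> cm R"
  proof -
    have "is_path E ([s] @ tl R)" "last ([s] @ tl R) = g" "cm ([s] @ tl R) \<le> cm R"
      using RsT R(1) by (simp_all add: st_path_def)
    then show ?thesis using witness[OF I sin] by blast
  qed
  have I1: "\<forall>(c,v,P)\<in>set OL. is_path E P \<and> hd P = s \<and> v = last P \<and> (c = cm P \<or> OL = [(0,s,[s])])"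
    using I by (simp add: inv_def)
  from res show ?thesis
  proof cases
    case 1
    then show ?thesis using wit by simp
  next
    case (2 c P)
    have me: "(c, g, P) \<in> set OL" "\<forall>t\<in>set OL. c \<le> fst t" using 2 by (auto simp: min_entry_def)
    have Pp: "is_path E P" "hd P = s" "g = last P" "c = cm P \<or> OL = [(0,s,[s])]" using I1 me(1) by auto
    have stP: "st_path E s g P" using Pp by (simp add: st_path_def)
    have opt: "cm P \<le> cm Q" if Q: "st_path E s g Q" for Q
    proof (cases "OL = [(0,s,[s])]")
      case True
      then have "P = [s]" "g = s" using me(1) by auto
      moreover have "Q = [hd Q]" using Q \<open>g = s\<close> by (intro distinct_hd_last) (auto simp: st_path_def is_path_def)
      ultimately show ?thesis using Q by (simp add: st_path_def)
    next
      case False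
      then have cP: "c = cm P" using Pp(4) by simp
      obtain t T' where t: "t \<in> set OL" "is_path E (pth t @ T')" "cm (pth t @ T') \<le> cm R" using wit by blast
      obtain c' v' P' where tt: "t = (c', v', P')" by (cases t) auto
      have "is_path E P'" "c' = cm P'" using I1 t(1) tt False by auto
      have "\<forall>i<n. f i P' \<le> f i (P' @ T')" using mono_ext \<open>is_path E P'\<close> t(2) tt by simp
      then have "cm P' \<le> cm (P' @ T')" by (rule cmax_mono)
      moreover have "c \<le> c'" using me(2) t(1) tt by fastforce
      ultimately show ?thesis using cP \<open>c' = cm P'\<close> t(3) tt Rmin[OF Q] by simp
    qed
    show ?thesis using 2 stP opt by blast
  qed
qed

end

theorem mainTheorem3:
  fixes V :: "'v set" and E :: "'v \<Rightarrow> 'v \<Rightarrow> bool" and s g :: 'v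
    and n :: nat and f' :: "nat \<Rightarrow> 'v \<Rightarrow> 'v \<Rightarrow> real" and \<beta> :: "real list \<Rightarrow> real"
    and w :: "nat \<Rightarrow> real" and \<rho> :: real
  defines "f \<equiv> pcost \<beta> f'"
  assumes finV: "finite V"
    and edges_in: "\<And>x y. E x y \<Longrightarrow> x \<in> V \<and> y \<in> V"
    and strong: "\<And>x y. x \<in> V \<Longrightarrow> y \<in> V \<Longrightarrow> E\<^sup>*\<^sup>* x y"
    and sV: "s \<in> V" and gV: "g \<in> V"
    and n_pos: "n \<ge> 1"
    and nonneg: "\<And>i x y. i < n \<Longrightarrow> E x y \<Longrightarrow> f' i x y \<ge> 0"
    and mono_ext: "\<And>i P Q. i < n \<Longrightarrow> is_path E P \<Longrightarrow> is_path E (P @ Q) \<Longrightarrow> f i P \<le> f i (P @ Q)"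
    and mono_cont: "\<And>i P P' Q. i < n \<Longrightarrow> is_path E P \<Longrightarrow> is_path E P' \<Longrightarrow> last P = last P'
        \<Longrightarrow> is_path E Q \<Longrightarrow> hd Q = last P \<Longrightarrow> f i P' \<le> f i P
        \<Longrightarrow> f i (P' @ tl Q) \<le> f i (P @ tl Q)"
    and w_range: "\<And>i. i < n \<Longrightarrow> 0 \<le> w i \<and> w i \<le> 1"
    and rho_pos: "\<rho> > 0"
  shows "(\<nexists>X. X 0 = [(0, s, [s])] \<and> (\<forall>k. mmcp_step E g n f w \<rho> (X k) (X (Suc k))))
       \<and> (\<forall>OL res. (mmcp_step E g n f w \<rho>)\<^sup>*\<^sup>* [(0, s, [s])] OL \<and> mmcp_result g OL res \<longrightarrow>
            (\<exists>P. res = Some P \<and> st_path E s g P \<and>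
                 (\<forall>Q. st_path E s g Q \<longrightarrow> cmax n f w \<rho> P \<le> cmax n f w \<rho> Q)))"
proof -
  interpret mm V E s g n f w \<rho>
    using edges_in sV n_pos mono_ext mono_cont w_range rho_pos by unfold_locales auto
  have conn: "E\<^sup>*\<^sup>* s g" using strong sV gV by blast
  show ?thesis using no_infinite[OF finV] result_ok[OF finV conn] by blast
qed

end
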